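(* Let $\mathcal R=\mathcal R(\operatorname{dom}\mathsf m,\sigma)$ be the resolvent algebra, and for $0<\kappa<\Lambda<\infty$ and $t\in\mathbb R$ let $\alpha_{\kappa,\Lambda,t}$ and $\alpha_t$ be the $*$-automorphisms of $\mathcal R$ determined on generators by $$\alpha_{\kappa,\Lambda,t}(R(z,f))=R\big(z+i\mathsf M_{\kappa,\Lambda,t}(f),e^{it\omega}f\big),\qquad \alpha_t(R(z,f))=R\big(z+i\mathsf M_t(f),e^{it\omega}f\big).$$ Then for every $T>0$ and every $A\in\mathcal R$, $$\lim_{\kappa\to0,\ \Lambda\to\infty}\ \sup_{|t|\le T}\big\|\alpha_{\kappa,\Lambda,t}(A)-\alpha_t(A)\big\|=0.$$
   Context: $L^2(\mathbb{R}^3)$ with Fourier transform $\hat f$, inner product $\langle f,g\rangle=\int\overline{\hat f}\hat g$, $\omega(k)=|k|$. $\operatorname{dom}\mathsf m=\{f\in L^2:\int|\hat f||k|^{-3/2}dk<\infty\}$, $\mathsf m(f)=\int\hat f|k|^{-3/2}dk$, $\mathsf m_{\kappa,\Lambda}(f)=\int|k|^{-3/2}\mathbf 1_{\{\kappa\le|k|\le\Lambda\}}\hat f\,dk$, $\mathsf M_{\kappa,\Lambda,t}(f)=\operatorname{Re}\mathsf m_{\kappa,\Lambda}((e^{it\omega}-1)f)$, $\mathsf M_t(f)=\operatorname{Re}\mathsf m((e^{it\omega}-1)f)$. The resolvent algebra $\mathcal R(X,\sigma)$ (Buchholz–Grundling) over the real symplectic space $X=\operatorname{dom}\mathsf m$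 with $\sigma(f,g)=\operatorname{Im}\langle f,g\rangle$ is the universal C*-algebra generated by elements $R(\lambda,f)$, $\lambda\in\mathbb R\setminus\{0\}$, $f\in X$, subject to: $R(\lambda,0)=-\frac i\lambda 1$; $R(\lambda,f)^*=R(-\lambda,f)$; $\nu R(\nu\lambda,\nu f)=R(\lambda,f)$ ($\nu\ne0$); $R(\lambda,f)-R(\mu,f)=i(\mu-\lambda)R(\lambda,f)R(\mu,f)$; $[R(\lambda,f),R(\mu,g)]=i\sigma(f,g)R(\lambda,f)R(\mu,g)^2R(\lambda,f)$; $R(\lambda,f)R(\mu,g)=R(\lambda+\mu,f+g)\big(R(\lambda,f)+R(\mu,g)+i\sigma(f,g)R(\lambda,f)^2R(\mu,g)\big)$ ($\lambda+\mu\ne0$). $R(\lambda,f)$ is analytic in $\lambda$ and extends to $R(z,f)$ for $z\in\mathbb C$ with $\operatorname{Re}z\ne0$ (satisfying the same relations, with $R(z,f)^*=R(-\bar z,f)$), and $\|R(z,f)\|\le1/|\operatorname{Re}z|$. In a regular representation $R(z,f)$ is represented by $(iz-\Phi(f))^{-1}$. *)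

theory Defs
  imports "HOL-Analysis.Analysis"
begin

text \<open>Elements f of L2(R3) are represented by their Fourier transforms hat f :: real^3 => complex.
  All data in the statement (inner product, m, e^{it omega}) are expressed through hat f,
  so we work directly with hat f.\<close>

definition dom_m :: "(real^3 \<Rightarrow> complex) set" where
  "dom_m = {f. f \<in> borel_measurable lborel
              \<and> integrable lborel (\<lambda>k. (norm (f k))\<^sup>2)
              \<and> integrable lborel (\<lambda>k. norm (f k) * norm k powr (-3/2))}"

definition l2_inner :: "(real^3 \<Rightarrow> complex) \<Rightarrow> (real^3 \<Rightarrow> complex) \<Rightarrow> complex" where
  "l2_inner f g = (LINT k|lborel. cnj (f k) * g k)"

definition symp :: "(real^3 \<Rightarrow> complex) \<Rightarrow> (real^3 \<Rightarrow> complex) \<Rightarrow> real" where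
  "symp f g = Im (l2_inner f g)"

definition mfun :: "(real^3 \<Rightarrow> complex) \<Rightarrow> complex" where
  "mfun f = (LINT k|lborel. complex_of_real (norm k powr (-3/2)) * f k)"

definition mfun_cut :: "real \<Rightarrow> real \<Rightarrow> (real^3 \<Rightarrow> complex) \<Rightarrow> complex" where
  "mfun_cut \<kappa> \<Lambda> f = (LINT k|lborel. complex_of_real (norm k powr (-3/2)
        * indicator {k. \<kappa> \<le> norm k \<and> norm k \<le> \<Lambda>} k) * f k)"

definition evol :: "real \<Rightarrow> (real^3 \<Rightarrow> complex) \<Rightarrow> (real^3 \<Rightarrow> complex)" where
  "evol t f = (\<lambda>k. exp (\<i> * complex_of_real (t * norm k)) * f k)"

definition Mfun :: "real \<Rightarrow> (real^3 \<Rightarrow> complex) \<Rightarrow> real" where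
  "Mfun t f = Re (mfun (\<lambda>k. evol t f k - f k))"

definition Mfun_cut :: "real \<Rightarrow> real \<Rightarrow> real \<Rightarrow> (real^3 \<Rightarrow> complex) \<Rightarrow> real" where
  "Mfun_cut \<kappa> \<Lambda> t f = Re (mfun_cut \<kappa> \<Lambda> (\<lambda>k. evol t f k - f k))"

text \<open>A unital complex C*-algebra is encoded as a real Banach algebra with unit (type class),
  together with an involution st and a central element j with j*j = -1 playing the role of
  the imaginary unit (complex scalar multiplication is then c.x = Re c x + Im c (j x)).\<close>

definition cstar_algebra :: "('a::{real_normed_algebra_1,banach} \<Rightarrow> 'a) \<Rightarrow> 'a \<Rightarrow> bool" where
  "cstar_algebra st j \<longleftrightarrow>
     j * j = - 1 \<and> (\<forall>x. j * x = x * j) \<and>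
     (\<forall>x. st (st x) = x) \<and> (\<forall>x y. st (x + y) = st x + st y) \<and>
     (\<forall>r x. st (r *\<^sub>R x) = r *\<^sub>R st x) \<and> (\<forall>x. st (j * x) = - (j * st x)) \<and>
     (\<forall>x y. st (x * y) = st y * st x) \<and>
     (\<forall>x. norm (st x * x) = (norm x)\<^sup>2)"

definition cscale :: "'a::real_normed_algebra_1 \<Rightarrow> complex \<Rightarrow> 'a \<Rightarrow> 'a" where
  "cscale j c x = Re c *\<^sub>R x + Im c *\<^sub>R (j * x)"

definition star_automorphism ::
  "('a::{real_normed_algebra_1,banach} \<Rightarrow> 'a) \<Rightarrow> 'a \<Rightarrow> ('a \<Rightarrow> 'a) \<Rightarrow> bool" where
  "star_automorphism st j \<alpha> \<longleftrightarrow> bij \<alpha> \<and>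
     (\<forall>x y. \<alpha> (x + y) = \<alpha> x + \<alpha> y) \<and> (\<forall>r x. \<alpha> (r *\<^sub>R x) = r *\<^sub>R \<alpha> x) \<and>
     (\<forall>x. \<alpha> (j * x) = j * \<alpha> x) \<and> (\<forall>x y. \<alpha> (x * y) = \<alpha> x * \<alpha> y) \<and>
     (\<forall>x. \<alpha> (st x) = st (\<alpha> x)) \<and> \<alpha> 1 = 1"

text \<open>R z f, for Re z ~= 0 and f in dom m, satisfying the Buchholz--Grundling relations
  (in their extension to complex z), the norm bound, and depending on f only through its
  L2 class (f = g a.e.).\<close>

definition resolvent_family ::
  "('a::{real_normed_algebra_1,banach} \<Rightarrow> 'a) \<Rightarrow> 'a \<Rightarrow> (complex \<Rightarrow> (real^3 \<Rightarrow> complex) \<Rightarrow> 'a) \<Rightarrow> bool" where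
  "resolvent_family st j R \<longleftrightarrow>
     (\<forall>z f g. Re z \<noteq> 0 \<longrightarrow> f \<in> dom_m \<longrightarrow> g \<in> dom_m \<longrightarrow> (AE k in lborel. f k = g k)
         \<longrightarrow> R z f = R z g) \<and>
     (\<forall>z. Re z \<noteq> 0 \<longrightarrow> R z (\<lambda>k. 0) = cscale j (- \<i> / z) 1) \<and>
     (\<forall>z f. Re z \<noteq> 0 \<longrightarrow> f \<in> dom_m \<longrightarrow> st (R z f) = R (- cnj z) f) \<and>
     (\<forall>z f \<nu>::real. Re z \<noteq> 0 \<longrightarrow> f \<in> dom_m \<longrightarrow> \<nu> \<noteq> 0 \<longrightarrow>
         \<nu> *\<^sub>R R (of_real \<nu> * z) (\<lambda>k. of_real \<nu> * f k) = R z f) \<and>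
     (\<forall>z w f. Re z \<noteq> 0 \<longrightarrow> Re w \<noteq> 0 \<longrightarrow> f \<in> dom_m \<longrightarrow>
         R z f - R w f = cscale j (\<i> * (w - z)) (R z f * R w f)) \<and>
     (\<forall>z w f g. Re z \<noteq> 0 \<longrightarrow> Re w \<noteq> 0 \<longrightarrow> f \<in> dom_m \<longrightarrow> g \<in> dom_m \<longrightarrow>
         R z f * R w g - R w g * R z f
           = cscale j (\<i> * of_real (symp f g)) (R z f * R w g * R w g * R z f)) \<and>
     (\<forall>z w f g. Re z \<noteq> 0 \<longrightarrow> Re w \<noteq> 0 \<longrightarrow> Re (z + w) \<noteq> 0 \<longrightarrow> f \<in> dom_m \<longrightarrow> g \<in> dom_m \<longrightarrow>
         R z f * R w g = R (z + w) (\<lambda>k. f k + g k) *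
            (R z f + R w g + cscale j (\<i> * of_real (symp f g)) (R z f * R z f * R w g))) \<and>
     (\<forall>z f. Re z \<noteq> 0 \<longrightarrow> f \<in> dom_m \<longrightarrow> norm (R z f) \<le> 1 / \<bar>Re z\<bar>)"

inductive_set star_alg_gen ::
  "('a::{real_normed_algebra_1,banach} \<Rightarrow> 'a) \<Rightarrow> 'a \<Rightarrow> (complex \<Rightarrow> (real^3 \<Rightarrow> complex) \<Rightarrow> 'a) \<Rightarrow> 'a set"
  for st j R where
  gen: "l \<noteq> 0 \<Longrightarrow> f \<in> dom_m \<Longrightarrow> R (complex_of_real l) f \<in> star_alg_gen st j R"
| one: "1 \<in> star_alg_gen st j R"
| add: "x \<in> star_alg_gen st j R \<Longrightarrow> y \<in> star_alg_gen st j R \<Longrightarrow> x + y \<in> star_alg_gen st j R"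
| mult: "x \<in> star_alg_gen st j R \<Longrightarrow> y \<in> star_alg_gen st j R \<Longrightarrow> x * y \<in> star_alg_gen st j R"
| scaleR: "x \<in> star_alg_gen st j R \<Longrightarrow> r *\<^sub>R x \<in> star_alg_gen st j R"
| multj: "x \<in> star_alg_gen st j R \<Longrightarrow> j * x \<in> star_alg_gen st j R"
| star: "x \<in> star_alg_gen st j R \<Longrightarrow> st x \<in> star_alg_gen st j R"

end

theory Submission
  imports Defs
begin


definition hcut :: "real \<Rightarrow> real \<Rightarrow> (real^3 \<Rightarrow> complex) \<Rightarrow> real" where
  "hcut \<kappa> \<Lambda> f = (LINT k|lborel. norm k powr (-3/2)
      * (1 - indicator {k. \<kappa> \<le> norm k \<and> norm k \<le> \<Lambda>} k) * norm (f k))"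

lemma ind_meas[measurable]: "{k::real^3. \<kappa> \<le> norm k \<and> norm k \<le> \<Lambda>} \<in> sets lborel"
proof -
  have "closed {k::real^3. \<kappa> \<le> norm k \<and> norm k \<le> \<Lambda>}"
    by (intro closed_Collect_conj closed_Collect_le) (auto intro: continuous_intros)
  then show ?thesis by simp
qed

lemma evol_meas[measurable]:
  assumes [measurable]: "f \<in> borel_measurable lborel"
  shows "evol t f \<in> borel_measurable lborel"
  unfolding evol_def by measurable

lemma norm_evol: "norm (evol t f k) = norm (f k)"
  by (simp add: evol_def norm_mult)

lemma evol_dom: assumes "f \<in> dom_m" shows "evol t f \<in> dom_m"
proof -
  have "f \<in> borel_measurable lborel" using assms unfolding dom_m_def by auto
  then have "evol t f \<in> borel_measurable lborel" by (rule evol_meas)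
  then show ?thesis using assms unfolding dom_m_def by (simp add: norm_evol)
qed

lemma M_diff:
  assumes f: "f \<in> dom_m"
  shows "\<bar>Mfun_cut \<kappa> \<Lambda> t f - Mfun t f\<bar> \<le> 2 * hcut \<kappa> \<Lambda> f"
proof -
  have [measurable]: "f \<in> borel_measurable lborel" and i1: "integrable lborel (\<lambda>k. norm (f k) * norm k powr (-3/2))"
    using f unfolding dom_m_def by auto
  define g where "g = (\<lambda>k. evol t f k - f k)"
  have [measurable]: "g \<in> borel_measurable lborel" unfolding g_def by measurable
  have ng: "norm (g k) \<le> 2 * norm (f k)" for k
    using norm_triangle_ineq4[of "evol t f k" "f k"] by (simp add: g_def norm_evol)
  define I where "I = {k::real^3. \<kappa> \<le> norm k \<and> norm k \<le> \<Lambda>}"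
  have i2: "integrable lborel (\<lambda>k. 2 * (norm (f k) * norm k powr (-3/2)))" using i1 by simp
  have ia: "integrable lborel (\<lambda>k. complex_of_real (norm k powr (-3/2) * indicator I k) * g k)"
  proof (rule Bochner_Integration.integrable_bound[OF i2])
    show "AE k in lborel. norm (complex_of_real (norm k powr (-3/2) * indicator I k) * g k)
        \<le> norm (2 * (norm (f k) * norm k powr (-3/2)))"
    proof (intro AE_I2)
      fix k
      have "norm (complex_of_real (norm k powr (-3/2) * indicator I k) * g k)
          = norm k powr (-3/2) * indicator I k * norm (g k)" by (simp add: norm_mult)
      also have "\<dots> \<le> norm k powr (-3/2) * 1 * (2 * norm (f k))"
        by (intro mult_mono ng) (auto simp: indicator_def)
      finally show "norm (complex_of_real (norm k powr (-3/2) * indicator I k) * g k)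
        \<le> norm (2 * (norm (f k) * norm k powr (-3/2)))" by (simp add: mult_ac)
    qed
  qed (unfold I_def, measurable)
  have ib: "integrable lborel (\<lambda>k. complex_of_real (norm k powr (-3/2)) * g k)"
  proof (rule Bochner_Integration.integrable_bound[OF i2])
    show "AE k in lborel. norm (complex_of_real (norm k powr (-3/2)) * g k)
        \<le> norm (2 * (norm (f k) * norm k powr (-3/2)))"
    proof (intro AE_I2)
      fix k
      have "norm (complex_of_real (norm k powr (-3/2)) * g k)
          = norm k powr (-3/2) * norm (g k)" by (simp add: norm_mult)
      also have "\<dots> \<le> norm k powr (-3/2) * (2 * norm (f k))"
        by (intro mult_mono ng) auto
      finally show "norm (complex_of_real (norm k powr (-3/2)) * g k)
        \<le> norm (2 * (norm (f k) * norm k powr (-3/2)))" by (simp add: mult_ac)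
    qed
  qed measurable
  have "Mfun_cut \<kappa> \<Lambda> t f - Mfun t f = Re (mfun_cut \<kappa> \<Lambda> g - mfun g)"
    by (simp add: Mfun_cut_def Mfun_def g_def)
  also have "mfun_cut \<kappa> \<Lambda> g - mfun g = (LINT k|lborel.
       complex_of_real (norm k powr (-3/2) * indicator I k) * g k - complex_of_real (norm k powr (-3/2)) * g k)"
    unfolding mfun_cut_def mfun_def I_def[symmetric] by (rule Bochner_Integration.integral_diff[OF ia ib, symmetric])
  finally have "\<bar>Mfun_cut \<kappa> \<Lambda> t f - Mfun t f\<bar> \<le> norm (LINT k|lborel.
       complex_of_real (norm k powr (-3/2) * indicator I k) * g k - complex_of_real (norm k powr (-3/2)) * g k)"
    using abs_Re_le_cmod by simp
  also have "\<dots> \<le> (LINT k|lborel. norm (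
       complex_of_real (norm k powr (-3/2) * indicator I k) * g k - complex_of_real (norm k powr (-3/2)) * g k))"
    by (rule integral_norm_bound)
  also have "\<dots> \<le> (LINT k|lborel. 2 * (norm k powr (-3/2) * (1 - indicator I k) * norm (f k)))"
  proof (rule integral_mono)
    show "integrable lborel (\<lambda>k. norm (
       complex_of_real (norm k powr (-3/2) * indicator I k) * g k - complex_of_real (norm k powr (-3/2)) * g k))"
      using ia ib by auto
    show "integrable lborel (\<lambda>k. 2 * (norm k powr (-3/2) * (1 - indicator I k) * norm (f k)))"
    proof (rule Bochner_Integration.integrable_bound[OF i2])
      show "AE k in lborel. norm (2 * (norm k powr (-3/2) * (1 - indicator I k) * norm (f k)))
          \<le> norm (2 * (norm (f k) * norm k powr (-3/2)))"
        by (intro AE_I2) (auto simp: indicator_def)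
    qed (unfold I_def, measurable)
    fix k
    have e: "complex_of_real (norm k powr (-3/2) * indicator I k) * g k - complex_of_real (norm k powr (-3/2)) * g k
       = - complex_of_real (norm k powr (-3/2) * (1 - indicator I k)) * g k"
      by (simp add: algebra_simps)
    have "norm (- complex_of_real (norm k powr (-3/2) * (1 - indicator I k)) * g k)
        = norm k powr (-3/2) * (1 - indicator I k) * norm (g k)"
      by (simp add: norm_mult indicator_def)
    also have "\<dots> \<le> norm k powr (-3/2) * (1 - indicator I k) * (2 * norm (f k))"
      by (intro mult_left_mono ng) (auto simp: indicator_def)
    finally show "norm (complex_of_real (norm k powr (-3/2) * indicator I k) * g k - complex_of_real (norm k powr (-3/2)) * g k)
        \<le> 2 * (norm k powr (-3/2) * (1 - indicator I k) * norm (f k))" unfolding e by simp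
  qed
  also have "\<dots> = 2 * hcut \<kappa> \<Lambda> f" unfolding hcut_def I_def by simp
  finally show ?thesis .
qed

lemma hcut_integrable:
  assumes f: "f \<in> dom_m"
  shows "integrable lborel (\<lambda>k. norm k powr (-3/2)
      * (1 - indicator {k. \<kappa> \<le> norm k \<and> norm k \<le> \<Lambda>} k) * norm (f k))"
proof -
  have [measurable]: "f \<in> borel_measurable lborel" and i1: "integrable lborel (\<lambda>k. norm (f k) * norm k powr (-3/2))"
    using f unfolding dom_m_def by auto
  show ?thesis
  proof (rule Bochner_Integration.integrable_bound[OF i1])
    show "AE k in lborel. norm (norm k powr (-3/2)
      * (1 - indicator {k. \<kappa> \<le> norm k \<and> norm k \<le> \<Lambda>} k) * norm (f k)) \<le> norm (norm (f k) * norm k powr (-3/2))"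
      by (intro AE_I2) (auto simp: indicator_def)
  qed measurable
qed

lemma hcut_mono:
  assumes f: "f \<in> dom_m" and "\<kappa> \<le> \<kappa>'" "\<Lambda>' \<le> \<Lambda>"
  shows "hcut \<kappa> \<Lambda> f \<le> hcut \<kappa>' \<Lambda>' f"
  unfolding hcut_def
proof (rule integral_mono[OF hcut_integrable[OF f] hcut_integrable[OF f]])
  fix k :: "real^3"
  have "1 - indicator {k. \<kappa> \<le> norm k \<and> norm k \<le> \<Lambda>} k \<le> (1 - indicator {k. \<kappa>' \<le> norm k \<and> norm k \<le> \<Lambda>'} k :: real)"
    using assms(2,3) by (auto simp: indicator_def)
  then show "norm k powr (-3/2) * (1 - indicator {k. \<kappa> \<le> norm k \<and> norm k \<le> \<Lambda>} k) * norm (f k)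
     \<le> norm k powr (-3/2) * (1 - indicator {k. \<kappa>' \<le> norm k \<and> norm k \<le> \<Lambda>'} k) * norm (f k)"
    by (intro mult_right_mono mult_left_mono) auto
qed

lemma hcut_seq:
  assumes f: "f \<in> dom_m"
  shows "(\<lambda>n. hcut (1 / (real n + 1)) (real n + 1) f) \<longlonglongrightarrow> 0"
proof -
  have [measurable]: "f \<in> borel_measurable lborel" and i1: "integrable lborel (\<lambda>k. norm (f k) * norm k powr (-3/2))"
    using f unfolding dom_m_def by auto
  have "(\<lambda>n. hcut (1 / (real n + 1)) (real n + 1) f) \<longlonglongrightarrow> integral\<^sup>L (lborel :: (real^3) measure) (\<lambda>k. 0::real)"
    unfolding hcut_def
  proof (rule integral_dominated_convergence[where w="\<lambda>k. norm (f k) * norm k powr (-3/2)" and f="\<lambda>k. 0"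
      and s="\<lambda>n k. norm k powr (-3/2)
      * (1 - indicator {k. 1 / (real n + 1) \<le> norm k \<and> norm k \<le> real n + 1} k) * norm (f k)"])
    show "integrable lborel (\<lambda>k. norm (f k) * norm k powr (-3/2))" by (rule i1)
    show "AE k in lborel. (\<lambda>n. norm k powr (-3/2)
      * (1 - indicator {k. 1 / (real n + 1) \<le> norm k \<and> norm k \<le> real n + 1} k) * norm (f k)) \<longlonglongrightarrow> 0"
    proof (intro AE_I2)
      fix k :: "real^3"
      show "(\<lambda>n. norm k powr (-3/2)
        * (1 - indicator {k. 1 / (real n + 1) \<le> norm k \<and> norm k \<le> real n + 1} k) * norm (f k)) \<longlonglongrightarrow> 0"
      proof (cases "k = 0")
        case True then show ?thesis by simp
      next
        case False
        then have nk: "norm k > 0" by simp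
        obtain N :: nat where N: "real N \<ge> max (norm k) (1 / norm k)" using real_arch_simple by blast
        have ev: "eventually (\<lambda>n. norm k powr (-3/2)
          * (1 - indicator {k. 1 / (real n + 1) \<le> norm k \<and> norm k \<le> real n + 1} k) * norm (f k) = 0) sequentially"
          unfolding eventually_sequentially
        proof (intro exI allI impI)
          fix n assume "N \<le> n"
          then have n: "real n \<ge> max (norm k) (1 / norm k)" using N by linarith
          have "1 / (real n + 1) \<le> norm k"
          proof -
            have "1 / norm k \<le> real n + 1" using n by simp
            then show ?thesis using nk by (simp add: field_simps)
          qed
          moreover have "norm k \<le> real n + 1" using n by simp
          ultimately show "norm k powr (-3/2)
            * (1 - indicator {k. 1 / (real n + 1) \<le> norm k \<and> norm k \<le> real n + 1} k) * norm (f k) = 0"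
            by (simp add: indicator_def)
        qed
        show ?thesis by (rule tendsto_eventually[OF ev])
      qed
    qed
    fix n :: nat
    show "AE k in lborel. norm (norm k powr (-3/2)
      * (1 - indicator {k. 1 / (real n + 1) \<le> norm k \<and> norm k \<le> real n + 1} k) * norm (f k))
       \<le> norm (f k) * norm k powr (-3/2)"
      by (intro AE_I2) (auto simp: indicator_def)
  qed measurable
  then show ?thesis by simp
qed

lemma hcut_lim:
  assumes f: "f \<in> dom_m" and e: "\<epsilon> > 0"
  shows "eventually (\<lambda>p. hcut (fst p) (snd p) f < \<epsilon>) (at_right 0 \<times>\<^sub>F at_top)"
proof -
  obtain N :: nat where N: "hcut (1 / (real N + 1)) (real N + 1) f < \<epsilon>"
    using order_tendstoD(2)[OF hcut_seq[OF f] e] eventually_sequentially by auto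
  have e1: "eventually (\<lambda>x::real. x < 1 / (real N + 1)) (at_right 0)"
    unfolding eventually_at_right_field by (intro exI[of _ "1 / (real N + 1)"]) auto
  have e2: "eventually (\<lambda>x::real. real N + 1 < x) at_top" by (rule eventually_gt_at_top)
  show ?thesis
    using eventually_prodI[OF e1 e2]
  proof (rule eventually_mono)
    fix p :: "real \<times> real" assume "fst p < 1 / (real N + 1) \<and> real N + 1 < snd p"
    then have "hcut (fst p) (snd p) f \<le> hcut (1 / (real N + 1)) (real N + 1) f"
      by (intro hcut_mono[OF f]) auto
    then show "hcut (fst p) (snd p) f < \<epsilon>" using N by linarith
  qed
qed



context
  fixes st :: "'a::{real_normed_algebra_1,banach} \<Rightarrow> 'a" and j :: 'a
  assumes cs: "cstar_algebra st j"
begin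

lemma cs_jj: "j * j = - 1" using cs unfolding cstar_algebra_def by blast
lemma cs_jc: "j * x = x * j" using cs unfolding cstar_algebra_def by blast
lemma cs_invol: "st (st x) = x" using cs unfolding cstar_algebra_def by blast
lemma cs_add: "st (x + y) = st x + st y" using cs unfolding cstar_algebra_def by blast
lemma cs_scale: "st (r *\<^sub>R x) = r *\<^sub>R st x" using cs unfolding cstar_algebra_def by blast
lemma cs_j: "st (j * x) = - (j * st x)" using cs unfolding cstar_algebra_def by blast
lemma cs_mult: "st (x * y) = st y * st x" using cs unfolding cstar_algebra_def by blast
lemma cs_norm: "norm (st x * x) = (norm x)\<^sup>2" using cs unfolding cstar_algebra_def by blast

lemma cs_zero: "st 0 = 0" using cs_scale[of 0 0] by simp
lemma cs_minus: "st (- x) = - st x" using cs_scale[of "-1" x] by simp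
lemma cs_diff: "st (x - y) = st x - st y" using cs_add[of x "-y"] cs_minus[of y] by simp
lemma cs_one: "st 1 = 1"
proof -
  have "st (st 1 * 1) = st 1 * st (st 1)" by (rule cs_mult)
  then have "st (st 1) = st 1 * 1" by (simp add: cs_invol)
  then show ?thesis by (simp add: cs_invol)
qed

lemma norm_st_le: "norm x \<le> norm (st x)"
proof (cases "x = 0")
  case True then show ?thesis by simp
next
  case False
  have "(norm x)\<^sup>2 \<le> norm (st x) * norm x" using cs_norm[of x] norm_mult_ineq[of "st x" x] by simp
  then show ?thesis using False by (simp add: power2_eq_square)
qed

lemma norm_st: "norm (st x) = norm x"
  using norm_st_le[of x] norm_st_le[of "st x"] by (simp add: cs_invol)

lemma norm_j: "norm j = 1"
proof -
  have "st j = - j" using cs_j[of 1] by (simp add: cs_one)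
  then have "(norm j)\<^sup>2 = 1" using cs_norm[of j] cs_jj by simp
  then show ?thesis using norm_ge_zero[of j] by (simp add: power2_eq_1_iff)
qed

lemma st_bl: "bounded_linear st"
  by (rule bounded_linear_intro[where K=1]) (auto simp: cs_add cs_scale norm_st)

lemma sqrt_exists:
  assumes sa: "st a = a" and na: "norm a \<le> 1/2"
  shows "\<exists>y. st y = y \<and> y * a = a * y \<and> y * y = 1 - a * a"
proof -
  define S where "S = {s. norm s \<le> 1/2 \<and> st s = s \<and> s * a = a * s}"
  define F where "F = (\<lambda>s. (1/2::real) *\<^sub>R (a * a + s * s))"
  have cst: "continuous_on UNIV st" using st_bl linear_continuous_on by blast
  have "closed S" unfolding S_def
    apply (intro closed_Collect_conj closed_Collect_le closed_Collect_eq)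
    by (auto intro!: continuous_intros cst)
  then have cS: "complete S" by (simp add: complete_eq_closed)
  have S0: "0 \<in> S" unfolding S_def by (simp add: cs_zero)
  have nsq: "norm (a * a) \<le> 1/4"
    using norm_mult_ineq[of a a] mult_mono[OF na na] by auto
  have FS: "F ` S \<subseteq> S"
  proof
    fix x assume "x \<in> F ` S"
    then obtain s where s: "s \<in> S" "x = F s" by auto
    have ns: "norm s \<le> 1/2" "st s = s" "s * a = a * s" using s unfolding S_def by auto
    have "norm (s * s) \<le> 1/4"
      using norm_mult_ineq[of s s] mult_mono[OF ns(1) ns(1)] by auto
    then have "norm (a * a + s * s) \<le> 1/2" using nsq norm_triangle_ineq[of "a * a" "s * s"] by linarith
    then have "norm x \<le> 1/2" using s(2) by (simp add: F_def)
    moreover have "st x = x" using s(2) ns by (simp add: F_def cs_scale cs_add cs_mult sa)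
    moreover have "x * a = a * x" using s(2) ns
      by (simp add: F_def algebra_simps mult.assoc) (metis mult.assoc)
    ultimately show "x \<in> S" unfolding S_def by auto
  qed
  have lip: "dist (F x) (F y) \<le> 1/2 * dist x y" if "x \<in> S" "y \<in> S" for x y
  proof -
    have nx: "norm x \<le> 1/2" and ny: "norm y \<le> 1/2" using that unfolding S_def by auto
    have e: "F x - F y = (1/2::real) *\<^sub>R (x * (x - y) + (x - y) * y)"
      by (simp add: F_def algebra_simps)
    have "norm (x * (x - y) + (x - y) * y) \<le> norm x * norm (x - y) + norm (x - y) * norm y"
      by (meson norm_mult_ineq norm_triangle_ineq order_trans add_mono)
    also have "\<dots> \<le> 1/2 * norm (x - y) + norm (x - y) * (1/2)"
      by (intro add_mono mult_right_mono mult_left_mono nx ny) auto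
    finally have "norm (x * (x - y) + (x - y) * y) \<le> norm (x - y)" by simp
    then show ?thesis by (simp add: dist_norm e)
  qed
  obtain s where s: "s \<in> S" "F s = s"
    using Banach_fix[OF cS _ _ _ FS, of "1/2"] S0 lip by auto
  have ss: "st s = s" "s * a = a * s" using s(1) unfolding S_def by auto
  have fs: "a * a + s * s = 2 *\<^sub>R s"
  proof -
    have "2 *\<^sub>R F s = a * a + s * s" by (simp add: F_def)
    then show ?thesis using s(2) by simp
  qed
  show ?thesis
  proof (intro exI conjI)
    show "st (1 - s) = 1 - s" by (simp add: cs_diff cs_one ss)
    show "(1 - s) * a = a * (1 - s)" by (simp add: algebra_simps ss)
    have "(1 - s) * (1 - s) = 1 - 2 *\<^sub>R s + s * s" by (simp add: algebra_simps scaleR_2)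
    also have "\<dots> = 1 - a * a" using fs by (simp add: algebra_simps)
    finally show "(1 - s) * (1 - s) = 1 - a * a" .
  qed
qed

lemma aut_basic:
  assumes "star_automorphism st j \<phi>"
  shows "\<phi> (x + y) = \<phi> x + \<phi> y" "\<phi> (r *\<^sub>R x) = r *\<^sub>R \<phi> x" "\<phi> (j * x) = j * \<phi> x"
    "\<phi> (x * y) = \<phi> x * \<phi> y" "\<phi> (st x) = st (\<phi> x)" "\<phi> 1 = 1"
  using assms unfolding star_automorphism_def by blast+

lemma aut_zero: "star_automorphism st j \<phi> \<Longrightarrow> \<phi> 0 = 0"
  using aut_basic(2)[of \<phi> 0 0] by simp

lemma aut_diff: "star_automorphism st j \<phi> \<Longrightarrow> \<phi> (x - y) = \<phi> x - \<phi> y"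
  using aut_basic(1)[of \<phi> "x - y" y] by (simp add: algebra_simps)

lemma selfadj_half:
  assumes A: "star_automorphism st j \<phi>" and sa: "st a = a" and na: "norm a \<le> 1/2"
  shows "norm (\<phi> a) \<le> 1"
proof -
  obtain y where y: "st y = y" "y * a = a * y" "y * y = 1 - a * a"
    using sqrt_exists[OF sa na] by blast
  define u where "u = a + j * y"
  have su: "st u = a - j * y" by (simp add: u_def cs_add cs_j y sa)
  have "st u * u = (a - j * y) * (a + j * y)" unfolding su by (simp add: u_def)
  also have "\<dots> = a * a + (a * (j * y) - (j * y) * a) - (j * y) * (j * y)"
    by (simp add: algebra_simps)
  also have "a * (j * y) = j * (a * y)"
    by (simp add: mult.assoc[symmetric] cs_jc[of a, symmetric])
  also have "(j * y) * a = j * (a * y)" by (simp add: mult.assoc y(2))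
  also have "(j * y) * (j * y) = - (y * y)"
  proof -
    have "(j * y) * (j * y) = j * ((y * j) * y)" by (simp add: mult.assoc)
    also have "\<dots> = j * ((j * y) * y)" using cs_jc[of y] by simp
    also have "\<dots> = (j * j) * (y * y)" by (simp add: mult.assoc)
    finally show ?thesis by (simp add: cs_jj)
  qed
  finally have uu: "st u * u = 1" using y(3) by simp
  have "(norm (\<phi> u))\<^sup>2 = norm (st (\<phi> u) * \<phi> u)" by (simp add: cs_norm)
  also have "\<dots> = norm (\<phi> (st u * u))" by (simp add: aut_basic[OF A])
  also have "\<dots> = 1" by (simp add: uu aut_basic[OF A])
  finally have nu: "norm (\<phi> u) = 1" using norm_ge_zero[of "\<phi> u"] by (simp add: power2_eq_1_iff)
  have "u + st u = 2 *\<^sub>R a" unfolding su by (simp add: u_def scaleR_2)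
  then have "\<phi> (u + st u) = 2 *\<^sub>R \<phi> a" by (simp add: aut_basic[OF A])
  then have "\<phi> u + st (\<phi> u) = 2 *\<^sub>R \<phi> a" by (simp add: aut_basic[OF A])
  then have "norm (2 *\<^sub>R \<phi> a) \<le> 2"
    using norm_triangle_ineq[of "\<phi> u" "st (\<phi> u)"] nu norm_st[of "\<phi> u"] by simp
  then show ?thesis by simp
qed

lemma selfadj_bound:
  assumes A: "star_automorphism st j \<phi>" and sa: "st a = a"
  shows "norm (\<phi> a) \<le> 2 * norm a"
proof (cases "a = 0")
  case True then show ?thesis using aut_zero[OF A] by simp
next
  case False
  define c where "c = 1 / (2 * norm a)"
  have c: "c > 0" using False by (simp add: c_def)
  have "norm (\<phi> (c *\<^sub>R a)) \<le> 1"
    by (rule selfadj_half[OF A]) (use False in \<open>simp_all add: cs_scale sa c_def\<close>)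
  then have "c * norm (\<phi> a) \<le> 1" using aut_basic(2)[OF A] c by simp
  then show ?thesis using False by (simp add: c_def field_simps)
qed

lemma aut_bound:
  assumes A: "star_automorphism st j \<phi>"
  shows "norm (\<phi> x) \<le> 2 * norm x"
proof -
  have "(norm (\<phi> x))\<^sup>2 = norm (st (\<phi> x) * \<phi> x)" by (simp add: cs_norm)
  also have "\<dots> = norm (\<phi> (st x * x))" by (simp add: aut_basic[OF A])
  also have "\<dots> \<le> 2 * norm (st x * x)"
    by (rule selfadj_bound[OF A]) (simp add: cs_mult cs_invol)
  also have "\<dots> = 2 * (norm x)\<^sup>2" by (simp add: cs_norm)
  also have "\<dots> \<le> (2 * norm x)\<^sup>2" by (simp add: power2_eq_square)
  finally have "(norm (\<phi> x))\<^sup>2 \<le> (2 * norm x)\<^sup>2" .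
  then show ?thesis by (rule power2_le_imp_le) simp
qed

end

lemma cscale_norm:
  assumes cs: "cstar_algebra st j"
  shows "norm (cscale j c x) \<le> 2 * cmod c * norm x"
proof -
  have "norm (cscale j c x) \<le> norm (Re c *\<^sub>R x) + norm (Im c *\<^sub>R (j * x))"
    unfolding cscale_def by (rule norm_triangle_ineq)
  also have "\<dots> \<le> cmod c * norm x + cmod c * norm x"
  proof (intro add_mono)
    show "norm (Re c *\<^sub>R x) \<le> cmod c * norm x"
      using abs_Re_le_cmod[of c] by (simp add: mult_right_mono)
    have "norm (j * x) \<le> norm x" using norm_mult_ineq[of j x] norm_j[OF cs] by simp
    then show "norm (Im c *\<^sub>R (j * x)) \<le> cmod c * norm x"
      using abs_Im_le_cmod[of c] by (simp add: mult_mono)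
  qed
  finally show ?thesis by (simp add: mult_ac)
qed

theorem mainTheorem13:
  fixes st :: "'a::{real_normed_algebra_1,banach} \<Rightarrow> 'a" and j :: 'a
    and R :: "complex \<Rightarrow> (real^3 \<Rightarrow> complex) \<Rightarrow> 'a"
    and \<alpha>cut :: "real \<Rightarrow> real \<Rightarrow> real \<Rightarrow> 'a \<Rightarrow> 'a"
    and \<alpha> :: "real \<Rightarrow> 'a \<Rightarrow> 'a"
    and T :: real and A :: 'a
  assumes cstar: "cstar_algebra st j"
    and res: "resolvent_family st j R"
    and generated: "UNIV = closure (star_alg_gen st j R)"
    and aut_cut: "\<And>\<kappa> \<Lambda> t. 0 < \<kappa> \<Longrightarrow> \<kappa> < \<Lambda> \<Longrightarrow> star_automorphism st j (\<alpha>cut \<kappa> \<Lambda> t)"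
    and gen_cut: "\<And>\<kappa> \<Lambda> t z f. 0 < \<kappa> \<Longrightarrow> \<kappa> < \<Lambda> \<Longrightarrow> Re z \<noteq> 0 \<Longrightarrow> f \<in> dom_m \<Longrightarrow>
        \<alpha>cut \<kappa> \<Lambda> t (R z f) = R (z + \<i> * complex_of_real (Mfun_cut \<kappa> \<Lambda> t f)) (evol t f)"
    and aut: "\<And>t. star_automorphism st j (\<alpha> t)"
    and gen: "\<And>t z f. Re z \<noteq> 0 \<Longrightarrow> f \<in> dom_m \<Longrightarrow>
        \<alpha> t (R z f) = R (z + \<i> * complex_of_real (Mfun t f)) (evol t f)"
    and T: "T > 0"
  shows "((\<lambda>(\<kappa>, \<Lambda>). SUP t\<in>{-T..T}. norm (\<alpha>cut \<kappa> \<Lambda> t A - \<alpha> t A)) \<longlongrightarrow> 0)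
           (at_right 0 \<times>\<^sub>F at_top)"
proof -
  define F where "F = (at_right (0::real) \<times>\<^sub>F at_top :: (real \<times> real) filter)"
  define D where "D = (\<lambda>\<kappa> \<Lambda> t X. \<alpha>cut \<kappa> \<Lambda> t X - \<alpha> t X)"
  define good where "good X \<longleftrightarrow> (\<forall>\<epsilon>>0. eventually (\<lambda>p. \<forall>t. norm (D (fst p) (snd p) t X) \<le> \<epsilon>) F)" for X
  have E0: "eventually (\<lambda>p. 0 < fst p \<and> fst p < snd p) F"
  proof -
    have e1: "eventually (\<lambda>x::real. 0 < x \<and> x < 1) (at_right 0)"
      unfolding eventually_at_right_field by (intro exI[of _ 1]) auto
    have e2: "eventually (\<lambda>x::real. 1 < x) at_top" by (rule eventually_gt_at_top)
    show ?thesis unfolding F_def using eventually_prodI[OF e1 e2] by (rule eventually_mono) auto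
  qed
  have res_diff: "\<And>z w f. Re z \<noteq> 0 \<Longrightarrow> Re w \<noteq> 0 \<Longrightarrow> f \<in> dom_m \<Longrightarrow>
         R z f - R w f = cscale j (\<i> * (w - z)) (R z f * R w f)"
    using res unfolding resolvent_family_def by blast
  have res_norm: "\<And>z f. Re z \<noteq> 0 \<Longrightarrow> f \<in> dom_m \<Longrightarrow> norm (R z f) \<le> 1 / \<bar>Re z\<bar>"
    using res unfolding resolvent_family_def by blast
  note ab = aut_basic[OF cstar]
  note genA = gen
  have good_gen: "good X" if "X \<in> star_alg_gen st j R" for X
    using that
  proof (induction rule: star_alg_gen.induct)
    case (gen l f)
    show ?case unfolding good_def
    proof (intro allI impI)
      fix \<epsilon> :: real assume e: "\<epsilon> > 0"
      have l2: "l\<^sup>2 > 0" using gen(1) by simp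
      have "eventually (\<lambda>p. hcut (fst p) (snd p) f < \<epsilon> * l\<^sup>2 / 4) F"
        unfolding F_def by (rule hcut_lim[OF gen(2)]) (use e l2 in simp)
      with E0 show "eventually (\<lambda>p. \<forall>t. norm (D (fst p) (snd p) t (R (complex_of_real l) f)) \<le> \<epsilon>) F"
      proof eventually_elim
        case (elim p)
        show ?case
        proof
          fix t
          define \<kappa> where "\<kappa> = fst p"
          define \<Lambda> where "\<Lambda> = snd p"
          have kl: "0 < \<kappa>" "\<kappa> < \<Lambda>" using elim unfolding \<kappa>_def \<Lambda>_def by auto
          have h: "hcut \<kappa> \<Lambda> f < \<epsilon> * l\<^sup>2 / 4" using elim unfolding \<kappa>_def \<Lambda>_def by auto
          define g where "g = evol t f"
          have g: "g \<in> dom_m" unfolding g_def by (rule evol_dom[OF gen(2)])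
          define z1 where "z1 = complex_of_real l + \<i> * complex_of_real (Mfun_cut \<kappa> \<Lambda> t f)"
          define z2 where "z2 = complex_of_real l + \<i> * complex_of_real (Mfun t f)"
          have rz: "Re z1 = l" "Re z2 = l" unfolding z1_def z2_def by simp_all
          have Dz: "D \<kappa> \<Lambda> t (R (complex_of_real l) f) = R z1 g - R z2 g"
            unfolding D_def z1_def z2_def g_def
            using gen_cut[OF kl, of "complex_of_real l" f t] genA[of "complex_of_real l" f t] gen by simp
          also have "\<dots> = cscale j (\<i> * (z2 - z1)) (R z1 g * R z2 g)"
            by (rule res_diff) (use rz gen(1) g in auto)
          finally have "norm (D \<kappa> \<Lambda> t (R (complex_of_real l) f))
              \<le> 2 * cmod (\<i> * (z2 - z1)) * norm (R z1 g * R z2 g)"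
            using cscale_norm[OF cstar] by simp
          also have "\<dots> \<le> 2 * \<bar>Mfun_cut \<kappa> \<Lambda> t f - Mfun t f\<bar> * ((1 / \<bar>l\<bar>) * (1 / \<bar>l\<bar>))"
          proof (rule mult_mono)
            show "2 * cmod (\<i> * (z2 - z1)) \<le> 2 * \<bar>Mfun_cut \<kappa> \<Lambda> t f - Mfun t f\<bar>"
            proof -
              have "\<i> * (z2 - z1) = \<i> * (\<i> * complex_of_real (Mfun t f - Mfun_cut \<kappa> \<Lambda> t f))"
                unfolding z1_def z2_def by (simp add: algebra_simps)
              then have "cmod (\<i> * (z2 - z1)) = \<bar>Mfun_cut \<kappa> \<Lambda> t f - Mfun t f\<bar>"
                by (simp flip: of_real_diff)
              then show ?thesis by simp
            qed
            have "norm (R z1 g * R z2 g) \<le> norm (R z1 g) * norm (R z2 g)" by (rule norm_mult_ineq)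
            also have "\<dots> \<le> (1 / \<bar>l\<bar>) * (1 / \<bar>l\<bar>)"
              using res_norm[of z1 g] res_norm[of z2 g] rz gen(1) g
              by (intro mult_mono) auto
            finally show "norm (R z1 g * R z2 g) \<le> (1 / \<bar>l\<bar>) * (1 / \<bar>l\<bar>)" .
          qed auto
          also have "\<dots> \<le> 2 * (2 * hcut \<kappa> \<Lambda> f) * ((1 / \<bar>l\<bar>) * (1 / \<bar>l\<bar>))"
            using M_diff[OF gen(2), of \<kappa> \<Lambda> t] by (intro mult_right_mono) auto
          also have "\<dots> = 4 * hcut \<kappa> \<Lambda> f / l\<^sup>2"
            by (simp add: power2_eq_square field_simps)
          also have "\<dots> \<le> \<epsilon>" using h l2 by (simp add: field_simps)
          finally show "norm (D (fst p) (snd p) t (R (complex_of_real l) f)) \<le> \<epsilon>" by (simp add: \<kappa>_def \<Lambda>_def)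
        qed
      qed
    qed
  next
    case one
    show ?case unfolding good_def
    proof (intro allI impI)
      fix \<epsilon> :: real assume e: "\<epsilon> > 0"
      from E0 show "eventually (\<lambda>p. \<forall>t. norm (D (fst p) (snd p) t 1) \<le> \<epsilon>) F"
        by eventually_elim (use e in \<open>auto simp: D_def ab[OF aut_cut] ab[OF aut]\<close>)
    qed
  next
    case (add x y)
    show ?case unfolding good_def
    proof (intro allI impI)
      fix \<epsilon> :: real assume e: "\<epsilon> > 0"
      have "eventually (\<lambda>p. \<forall>t. norm (D (fst p) (snd p) t x) \<le> \<epsilon>/2) F"
        using add.IH(1) half_gt_zero[OF e] unfolding good_def by blast
      moreover have "eventually (\<lambda>p. \<forall>t. norm (D (fst p) (snd p) t y) \<le> \<epsilon>/2) F"
        using add.IH(2) half_gt_zero[OF e] unfolding good_def by blast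
      moreover note E0
      ultimately show "eventually (\<lambda>p. \<forall>t. norm (D (fst p) (snd p) t (x + y)) \<le> \<epsilon>) F"
      proof eventually_elim
        case (elim p)
        show ?case
        proof
          fix t
          have "D (fst p) (snd p) t (x + y) = D (fst p) (snd p) t x + D (fst p) (snd p) t y"
            using elim by (simp add: D_def ab[OF aut_cut] ab[OF aut])
          moreover have "norm (D (fst p) (snd p) t x) \<le> \<epsilon>/2" "norm (D (fst p) (snd p) t y) \<le> \<epsilon>/2"
            using elim by auto
          ultimately show "norm (D (fst p) (snd p) t (x + y)) \<le> \<epsilon>"
            using norm_triangle_ineq[of "D (fst p) (snd p) t x" "D (fst p) (snd p) t y"] by simp
        qed
      qed
    qed
  next
    case (mult x y)
    show ?case unfolding good_def
    proof (intro allI impI)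
      fix \<epsilon> :: real assume e: "\<epsilon> > 0"
      define \<delta> where "\<delta> = \<epsilon> / (2 * norm x + 2 * norm y + 1)"
      have d: "\<delta> > 0" unfolding \<delta>_def using e by (simp add: add_nonneg_pos)
      have pos: "2 * norm x + 2 * norm y + 1 > 0" using norm_ge_zero[of x] norm_ge_zero[of y] by linarith
      have de: "\<delta> * (2 * norm x + 2 * norm y + 1) = \<epsilon>" unfolding \<delta>_def
        using pos by simp
      have "eventually (\<lambda>p. \<forall>t. norm (D (fst p) (snd p) t x) \<le> \<delta>) F"
        using mult.IH(1) d unfolding good_def by blast
      moreover have "eventually (\<lambda>p. \<forall>t. norm (D (fst p) (snd p) t y) \<le> \<delta>) F"
        using mult.IH(2) d unfolding good_def by blast
      moreover note E0
      ultimately show "eventually (\<lambda>p. \<forall>t. norm (D (fst p) (snd p) t (x * y)) \<le> \<epsilon>) F"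
      proof eventually_elim
        case (elim p)
        show ?case
        proof
          fix t
          define \<kappa> where "\<kappa> = fst p"
          define \<Lambda> where "\<Lambda> = snd p"
          have kl: "0 < \<kappa>" "\<kappa> < \<Lambda>" using elim unfolding \<kappa>_def \<Lambda>_def by auto
          have Dx: "norm (D \<kappa> \<Lambda> t x) \<le> \<delta>" and Dy: "norm (D \<kappa> \<Lambda> t y) \<le> \<delta>"
            using elim unfolding \<kappa>_def \<Lambda>_def by auto
          have "D \<kappa> \<Lambda> t (x * y) = \<alpha>cut \<kappa> \<Lambda> t x * D \<kappa> \<Lambda> t y + D \<kappa> \<Lambda> t x * \<alpha> t y"
            by (simp add: D_def ab[OF aut_cut[OF kl]] ab[OF aut] algebra_simps)
          then have "norm (D \<kappa> \<Lambda> t (x * y)) \<le> norm (\<alpha>cut \<kappa> \<Lambda> t x * D \<kappa> \<Lambda> t y) + norm (D \<kappa> \<Lambda> t x * \<alpha> t y)"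
            by (simp add: norm_triangle_ineq)
          also have "\<dots> \<le> norm (\<alpha>cut \<kappa> \<Lambda> t x) * norm (D \<kappa> \<Lambda> t y) + norm (D \<kappa> \<Lambda> t x) * norm (\<alpha> t y)"
            by (intro add_mono norm_mult_ineq)
          also have "\<dots> \<le> (2 * norm x) * \<delta> + \<delta> * (2 * norm y)"
            using aut_bound[OF cstar aut_cut[OF kl], of t x] aut_bound[OF cstar aut, of t y] Dx Dy d
            by (intro add_mono mult_mono) auto
          also have "\<dots> \<le> \<delta> * (2 * norm x + 2 * norm y + 1)" using d by (simp add: algebra_simps)
          finally show "norm (D (fst p) (snd p) t (x * y)) \<le> \<epsilon>" using de by (simp add: \<kappa>_def \<Lambda>_def)
        qed
      qed
    qed
  next
    case (scaleR x r)
    show ?case unfolding good_def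
    proof (intro allI impI)
      fix \<epsilon> :: real assume e: "\<epsilon> > 0"
      define \<delta> where "\<delta> = \<epsilon> / (\<bar>r\<bar> + 1)"
      have d: "\<delta> > 0" unfolding \<delta>_def using e by (simp add: add_nonneg_pos)
      have pos: "\<bar>r\<bar> + 1 > 0" by simp
      have de: "\<delta> * (\<bar>r\<bar> + 1) = \<epsilon>" unfolding \<delta>_def using pos by (simp del: abs_ge_zero add: abs_add_one_gt_zero)
      have "eventually (\<lambda>p. \<forall>t. norm (D (fst p) (snd p) t x) \<le> \<delta>) F"
        using scaleR.IH d unfolding good_def by auto
      with E0 show "eventually (\<lambda>p. \<forall>t. norm (D (fst p) (snd p) t (r *\<^sub>R x)) \<le> \<epsilon>) F"
      proof eventually_elim
        case (elim p)
        show ?case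
        proof
          fix t
          have "D (fst p) (snd p) t (r *\<^sub>R x) = r *\<^sub>R D (fst p) (snd p) t x"
            using elim by (simp add: D_def ab[OF aut_cut] ab[OF aut] scaleR_diff_right)
          then have "norm (D (fst p) (snd p) t (r *\<^sub>R x)) = \<bar>r\<bar> * norm (D (fst p) (snd p) t x)" by simp
          also have "\<dots> \<le> (\<bar>r\<bar> + 1) * \<delta>" using elim by (intro mult_mono) auto
          finally show "norm (D (fst p) (snd p) t (r *\<^sub>R x)) \<le> \<epsilon>" using de by (simp add: mult.commute)
        qed
      qed
    qed
  next
    case (multj x)
    show ?case unfolding good_def
    proof (intro allI impI)
      fix \<epsilon> :: real assume e: "\<epsilon> > 0"
      have "eventually (\<lambda>p. \<forall>t. norm (D (fst p) (snd p) t x) \<le> \<epsilon>) F"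
        using multj.IH e unfolding good_def by auto
      with E0 show "eventually (\<lambda>p. \<forall>t. norm (D (fst p) (snd p) t (j * x)) \<le> \<epsilon>) F"
      proof eventually_elim
        case (elim p)
        show ?case
        proof
          fix t
          have "D (fst p) (snd p) t (j * x) = j * D (fst p) (snd p) t x"
            using elim by (simp add: D_def ab(3)[OF aut_cut] ab(3)[OF aut] right_diff_distrib)
          then have "norm (D (fst p) (snd p) t (j * x)) \<le> norm (D (fst p) (snd p) t x)"
            using norm_mult_ineq[of j "D (fst p) (snd p) t x"] norm_j[OF cstar] by simp
          then show "norm (D (fst p) (snd p) t (j * x)) \<le> \<epsilon>" using elim by (meson order_trans)
        qed
      qed
    qed
  next
    case (star x)
    show ?case unfolding good_def
    proof (intro allI impI)
      fix \<epsilon> :: real assume e: "\<epsilon> > 0"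
      have "eventually (\<lambda>p. \<forall>t. norm (D (fst p) (snd p) t x) \<le> \<epsilon>) F"
        using star.IH e unfolding good_def by auto
      with E0 show "eventually (\<lambda>p. \<forall>t. norm (D (fst p) (snd p) t (st x)) \<le> \<epsilon>) F"
      proof eventually_elim
        case (elim p)
        show ?case
        proof
          fix t
          have "D (fst p) (snd p) t (st x) = st (D (fst p) (snd p) t x)"
            using elim by (simp add: D_def ab[OF aut_cut] ab[OF aut] cs_diff[OF cstar])
          then show "norm (D (fst p) (snd p) t (st x)) \<le> \<epsilon>" using elim norm_st[OF cstar] by auto
        qed
      qed
    qed
  qed
  have goodA: "good A"
    unfolding good_def
  proof (intro allI impI)
    fix \<epsilon> :: real assume e: "\<epsilon> > 0"
    have "A \<in> closure (star_alg_gen st j R)" using generated by blast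
    then obtain B where B: "B \<in> star_alg_gen st j R" "dist B A < \<epsilon> / 8"
      using e unfolding closure_approachable by (metis divide_pos_pos zero_less_numeral)
    have "eventually (\<lambda>p. \<forall>t. norm (D (fst p) (snd p) t B) \<le> \<epsilon>/2) F"
      using good_gen[OF B(1)] half_gt_zero[OF e] unfolding good_def by blast
    with E0 show "eventually (\<lambda>p. \<forall>t. norm (D (fst p) (snd p) t A) \<le> \<epsilon>) F"
    proof eventually_elim
      case (elim p)
      show ?case
      proof
        fix t
        define \<kappa> where "\<kappa> = fst p"
        define \<Lambda> where "\<Lambda> = snd p"
        have kl: "0 < \<kappa>" "\<kappa> < \<Lambda>" using elim unfolding \<kappa>_def \<Lambda>_def by auto
        have DB: "norm (D \<kappa> \<Lambda> t B) \<le> \<epsilon>/2" using elim unfolding \<kappa>_def \<Lambda>_def by auto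
        have nAB: "norm (A - B) < \<epsilon> / 8" using B(2) by (simp add: dist_norm norm_minus_commute)
        have "D \<kappa> \<Lambda> t A = D \<kappa> \<Lambda> t B + \<alpha>cut \<kappa> \<Lambda> t (A - B) - \<alpha> t (A - B)"
          by (simp add: D_def aut_diff[OF cstar aut_cut[OF kl]] aut_diff[OF cstar aut])
        then have "norm (D \<kappa> \<Lambda> t A) \<le> norm (D \<kappa> \<Lambda> t B) + norm (\<alpha>cut \<kappa> \<Lambda> t (A - B)) + norm (\<alpha> t (A - B))"
          using norm_triangle_ineq4[of "D \<kappa> \<Lambda> t B + \<alpha>cut \<kappa> \<Lambda> t (A - B)" "\<alpha> t (A - B)"]
          norm_triangle_ineq[of "D \<kappa> \<Lambda> t B" "\<alpha>cut \<kappa> \<Lambda> t (A - B)"] by simp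
        also have "\<dots> \<le> \<epsilon>/2 + 2 * norm (A - B) + 2 * norm (A - B)"
          using aut_bound[OF cstar aut_cut[OF kl], of t "A - B"] aut_bound[OF cstar aut, of t "A - B"] DB
          by linarith
        also have "\<dots> \<le> \<epsilon>" using nAB by linarith
        finally show "norm (D (fst p) (snd p) t (A)) \<le> \<epsilon>" by (simp add: \<kappa>_def \<Lambda>_def)
      qed
    qed
  qed
  show ?thesis
  proof (rule tendstoI)
    fix \<epsilon> :: real assume e: "\<epsilon> > 0"
    have "eventually (\<lambda>p. \<forall>t. norm (D (fst p) (snd p) t A) \<le> \<epsilon>/2) F"
      using goodA half_gt_zero[OF e] unfolding good_def by blast
    then show "eventually (\<lambda>p. dist ((\<lambda>(\<kappa>, \<Lambda>). SUP t\<in>{-T..T}. norm (\<alpha>cut \<kappa> \<Lambda> t A - \<alpha> t A)) p) 0 < \<epsilon>)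
        (at_right 0 \<times>\<^sub>F at_top)"
      unfolding F_def
    proof (rule eventually_mono)
      fix p :: "real \<times> real"
      assume H: "\<forall>t. norm (D (fst p) (snd p) t A) \<le> \<epsilon>/2"
      obtain \<kappa> \<Lambda> where p: "p = (\<kappa>, \<Lambda>)" by (cases p)
      define S where "S = (SUP t\<in>{-T..T}. norm (\<alpha>cut \<kappa> \<Lambda> t A - \<alpha> t A))"
      have H': "norm (\<alpha>cut \<kappa> \<Lambda> t A - \<alpha> t A) \<le> \<epsilon>/2" for t using H p by (simp add: D_def)
      have ne: "{-T..T} \<noteq> {}" using T by simp
      have "S \<le> \<epsilon>/2" unfolding S_def by (rule cSUP_least[OF ne H'])
      moreover have "norm (\<alpha>cut \<kappa> \<Lambda> 0 A - \<alpha> 0 A) \<le> S" unfolding S_def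
        apply (rule cSUP_upper)
        using T apply simp
        apply (rule bdd_aboveI2[where M="\<epsilon>/2"])
        apply (rule H')
        done
      then have "0 \<le> S" by (meson norm_ge_zero order_trans)
      ultimately show "dist ((\<lambda>(\<kappa>, \<Lambda>). SUP t\<in>{-T..T}. norm (\<alpha>cut \<kappa> \<Lambda> t A - \<alpha> t A)) p) 0 < \<epsilon>"
        using e by (simp add: p S_def[symmetric] dist_real_def)
    qed
  qed
qed

end
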